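(* Let $F$ be a distribution function whose hazard rate $h$ satisfies (H), $h(t)=o(t^{-1}\log t)$ as $t\to\infty$, and $\limsup_{t\to\infty}t\,h(t)^2/h(1/h(t))<\infty$. Let $M>0$ and $K\in B(F,M)$. Then for all positive real numbers $a$ and $b$, $$\big(\mathsf T_K\overline{\mathsf M_aF}\big)(t)-\overline{\mathsf M_aF}(t)=o\big(\overline{\mathsf M_bF}(t)\big)\qquad(t\to\infty).$$
   Context: For a distribution function $K$, $\overline K=1-K$; for real $c$, $\mathsf M_cK$ is the distribution of $cY$ with $Y\sim K$, so $\overline{\mathsf M_cF}(t)=\overline F(t/c)$ for $c>0$. The hazard rate is $h=F'/\overline F$, assumed to exist for all large $t$, so that $\overline F(t)=\overline F(t_0)\exp(-\int_{t_0}^th(u)\,du)$. Condition (H): $h$ is regularly varying, $\lim_{t\to\infty}th(t)=+\infty$, $\lim_{t\to\infty}h(t)=0$. For $M>0$, $B(F,M)$ is the set of distribution functions $K$ such that $\overline K(x)\le M\overline F(x)$ and $\overline{\mathsf M_{-1}K}(x)\le M\overline F(x)$ for all $x\ge0$. The operator $\mathsf T_K$ is $\mathsf T_Kf(t)=\int_{-\infty}^{t/2}f(t-x)\,dK(x)$. *)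

theory Defs
  imports "HOL-Analysis.Analysis" "HOL-Library.Landau_Symbols"
begin

definition distribution_function :: "(real \<Rightarrow> real) \<Rightarrow> bool" where
  "distribution_function F \<longleftrightarrow> mono F \<and> (\<forall>x. continuous (at_right x) F)
     \<and> (F \<longlongrightarrow> 0) at_bot \<and> (F \<longlongrightarrow> 1) at_top"

definition tail :: "(real \<Rightarrow> real) \<Rightarrow> real \<Rightarrow> real" where
  "tail K t = 1 - K t"

text \<open>M_c K for c > 0: distribution of c Y, i.e. t \<mapsto> K (t / c).\<close>
definition scale_df :: "real \<Rightarrow> (real \<Rightarrow> real) \<Rightarrow> real \<Rightarrow> real" where
  "scale_df c K t = K (t / c)"

text \<open>Tail of M_{-1} K at x: P(-Y > x) = P(Y < -x), via the Lebesgue-Stieltjes measure of K.\<close>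
definition neg_tail :: "(real \<Rightarrow> real) \<Rightarrow> real \<Rightarrow> real" where
  "neg_tail K x = measure (interval_measure K) {..< -x}"

definition regularly_varying :: "(real \<Rightarrow> real) \<Rightarrow> bool" where
  "regularly_varying h \<longleftrightarrow> (\<forall>\<^sub>F t in at_top. h t > 0) \<and>
     (\<exists>\<rho>::real. \<forall>c>0. ((\<lambda>t. h (c * t) / h t) \<longlongrightarrow> c powr \<rho>) at_top)"

definition cond_H :: "(real \<Rightarrow> real) \<Rightarrow> bool" where
  "cond_H h \<longleftrightarrow> regularly_varying h \<and> filterlim (\<lambda>t. t * h t) at_top at_top
     \<and> (h \<longlongrightarrow> 0) at_top"

definition hazard_rate :: "(real \<Rightarrow> real) \<Rightarrow> (real \<Rightarrow> real) \<Rightarrow> bool" where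
  "hazard_rate F h \<longleftrightarrow> (\<exists>t0. \<forall>t\<ge>t0. F t < 1 \<and> (F has_real_derivative (h t * (1 - F t))) (at t))"

definition B_class :: "(real \<Rightarrow> real) \<Rightarrow> real \<Rightarrow> (real \<Rightarrow> real) set" where
  "B_class F M = {K. distribution_function K \<and>
     (\<forall>x\<ge>0. tail K x \<le> M * tail F x \<and> neg_tail K x \<le> M * tail F x)}"

definition T_op :: "(real \<Rightarrow> real) \<Rightarrow> (real \<Rightarrow> real) \<Rightarrow> real \<Rightarrow> real" where
  "T_op K f t = (LINT x:{..t/2}|interval_measure K. f (t - x))"

end

theory Submission
  imports Defs "HOL-Probability.Probability" "HOL-Real_Asymp.Real_Asymp"
begin

lemma df_bounds:
  assumes "distribution_function F"
  shows "0 \<le> F x" "F x \<le> 1"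
proof -
  have m: "mono F" and l0: "(F \<longlongrightarrow> 0) at_bot" and l1: "(F \<longlongrightarrow> 1) at_top"
    using assms by (auto simp: distribution_function_def)
  show "0 \<le> F x"
    using l0 by (rule tendsto_upperbound) (auto simp: eventually_at_bot_linorder intro!: exI[of _ x] monoD[OF m])
  show "F x \<le> 1"
    using l1 by (rule tendsto_lowerbound) (auto simp: eventually_at_top_linorder intro!: exI[of _ x] monoD[OF m])
qed

lemma df_prob:
  assumes "distribution_function K"
  shows "prob_space (interval_measure K)"
    and "measure (interval_measure K) {..x} = K x"
    and "measure (interval_measure K) {x<..} = tail K x"
proof -
  have m: "mono K" and rc: "\<And>x. continuous (at_right x) K" and l0: "(K \<longlongrightarrow> 0) at_bot" and l1: "(K \<longlongrightarrow> 1) at_top"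
    using assms by (auto simp: distribution_function_def)
  have nd: "\<And>x y. x \<le> y \<Longrightarrow> K x \<le> K y" using m by (auto simp: mono_def)
  have rd: "real_distribution (interval_measure K)"
    by (rule real_distribution_interval_measure[OF nd rc l0 l1])
  then show ps: "prob_space (interval_measure K)" by (simp add: real_distribution_def)
  show ic: "measure (interval_measure K) {..x} = K x"
    by (rule measure_interval_measure_Iic[OF nd rc l0])
  interpret prob_space "interval_measure K" by (rule ps)
  have "measure (interval_measure K) (UNIV - {..x}) = 1 - measure (interval_measure K) {..x}"
    by (rule prob_compl[simplified]) simp
  moreover have "UNIV - {..x} = {x<..}" by auto
  ultimately show "measure (interval_measure K) {x<..} = tail K x"
    using ic by (simp add: tail_def)
qed

lemma T_bound:
  assumes dF: "distribution_function F" and KB: "K \<in> B_class F M" and a: "a > 0"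
    and M0: "M > 0" and L0: "0 \<le> L" and Lt: "L \<le> t/2"
  shows "T_op K (tail (scale_df a F)) t - tail (scale_df a F) t
           \<le> (tail (scale_df a F) (t-L) - tail (scale_df a F) (t+L)) + M * tail (scale_df a F) (t/2) * tail F L"
    and "tail (scale_df a F) t - T_op K (tail (scale_df a F)) t
           \<le> (tail (scale_df a F) (t-L) - tail (scale_df a F) (t+L)) + 2 * M * tail (scale_df a F) (t/2) * tail F L"
proof -
  define f where "f = tail (scale_df a F)"
  define \<mu> where "\<mu> = interval_measure K"
  have dK: "distribution_function K" and Kt: "\<And>x. x \<ge> 0 \<Longrightarrow> tail K x \<le> M * tail F x"
    and Kn: "\<And>x. x \<ge> 0 \<Longrightarrow> neg_tail K x \<le> M * tail F x"
    using KB by (auto simp: B_class_def)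
  have mF: "mono F" using dF by (simp add: distribution_function_def)
  have fmono: "f y \<le> f x" if "x \<le> y" for x y
  proof -
    have "x / a \<le> y / a" using that a by (simp add: divide_right_mono)
    then have "F (x/a) \<le> F (y/a)" using mF by (auto simp: mono_def)
    then show ?thesis by (simp add: f_def tail_def scale_df_def)
  qed
  have f01: "0 \<le> f x" "f x \<le> 1" for x
    using df_bounds[OF dF, of "x/a"] by (auto simp: f_def tail_def scale_df_def)
  interpret P: prob_space \<mu> unfolding \<mu>_def by (rule df_prob(1)[OF dK])
  have gmono: "mono (\<lambda>x. f (t - x))" unfolding mono_def by (intro allI impI fmono) simp
  have gm: "(\<lambda>x. f (t - x)) \<in> borel_measurable \<mu>"
  proof -
    have "measurable \<mu> borel = measurable borel borel" unfolding \<mu>_def by (rule measurable_cong_sets) simp_all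
    then show ?thesis using borel_measurable_mono[OF gmono] by metis
  qed
  have ig: "integrable \<mu> (\<lambda>x. indicator {..t/2} x * f (t - x))"
    apply (rule P.integrable_const_bound[where B=1])
    using f01 apply (auto simp: indicator_def)[1]
    using gm by (intro borel_measurable_times) (simp_all add: \<mu>_def)
  have ii: "integrable \<mu> (indicator A :: real \<Rightarrow> real)" if "A \<in> sets borel" for A
  proof -
    have "A \<in> sets \<mu>" using that by (simp add: \<mu>_def)
    then show ?thesis by (intro integrable_real_indicator) (auto simp: P.emeasure_eq_measure)
  qed
  have T: "T_op K f t = (\<integral>x. indicator {..t/2} x * f (t - x) \<partial>\<mu>)"
    by (simp add: T_op_def \<mu>_def set_lebesgue_integral_def)
  have sp: "space \<mu> = UNIV" by (simp add: \<mu>_def)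
  have tk: "measure \<mu> {x<..} = tail K x" for x unfolding \<mu>_def by (rule df_prob(3)[OF dK])
  have nk: "measure \<mu> {..< -x} = neg_tail K x" for x unfolding \<mu>_def by (simp add: neg_tail_def)
  have "(\<integral>x. indicator {..t/2} x * f (t - x) \<partial>\<mu>) \<le> (\<integral>x. f (t-L) + f (t/2) * indicator {L<..} x \<partial>\<mu>)"
  proof (rule integral_mono[OF ig])
    show "integrable \<mu> (\<lambda>x. f (t-L) + f (t/2) * indicator {L<..} x)"
      using ii by simp
    fix x
    show "indicator {..t/2} x * f (t - x) \<le> f (t-L) + f (t/2) * indicator {L<..} x"
      using f01[of "t-L"] f01[of "t/2"] fmono[of "t-L" "t-x"] fmono[of "t/2" "t-x"] Lt
      by (auto simp: indicator_def)
  qed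
  also have "\<dots> = f (t-L) + f (t/2) * tail K L"
    using ii by (simp add: tk sp P.prob_space[unfolded sp])
  finally have up: "T_op K f t \<le> f (t-L) + f (t/2) * tail K L" using T by simp
  have "(\<integral>x. f (t+L) * (1 - indicator {..< -L} x - indicator {t/2<..} x) \<partial>\<mu>) \<le> (\<integral>x. indicator {..t/2} x * f (t - x) \<partial>\<mu>)"
  proof (rule integral_mono[OF _ ig])
    show "integrable \<mu> (\<lambda>x. f (t+L) * (1 - indicator {..< -L} x - indicator {t/2<..} x))"
      using ii by simp
    fix x
    show "f (t+L) * (1 - indicator {..< -L} x - indicator {t/2<..} x) \<le> indicator {..t/2} x * f (t - x)"
      using f01[of "t+L"] f01[of "t-x"] fmono[of "t-x" "t+L"] Lt L0
      by (auto simp: indicator_def)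
  qed
  also have "(\<integral>x. f (t+L) * (1 - indicator {..< -L} x - indicator {t/2<..} x) \<partial>\<mu>)
     = f (t+L) * (1 - neg_tail K L - tail K (t/2))"
    using ii by (simp add: tk nk sp P.prob_space[unfolded sp])
  finally have lo: "f (t+L) * (1 - neg_tail K L - tail K (t/2)) \<le> T_op K f t" using T by simp
  have tF: "tail F (t/2) \<le> tail F L" using mF Lt by (auto simp: tail_def mono_def)
  have tKnn: "0 \<le> tail K x" for x using df_bounds[OF dK] by (simp add: tail_def)
  have nKnn: "0 \<le> neg_tail K x" for x by (simp add: neg_tail_def)
  have ft: "f (t-L) \<ge> f t" "f t \<ge> f (t+L)" "f (t+L) \<le> f (t/2)" using L0 Lt by (auto intro!: fmono)
  have "f (t/2) * tail K L \<le> f (t/2) * (M * tail F L)"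
    using Kt[OF L0] f01 by (simp add: mult_left_mono)
  with up ft show "T_op K (tail (scale_df a F)) t - tail (scale_df a F) t
           \<le> (tail (scale_df a F) (t-L) - tail (scale_df a F) (t+L)) + M * tail (scale_df a F) (t/2) * tail F L"
    unfolding f_def[symmetric] by (simp add: algebra_simps)
  have "neg_tail K L + tail K (t/2) \<le> 2 * M * tail F L"
  proof -
    have "M * tail F (t/2) \<le> M * tail F L" using tF M0 by (intro mult_left_mono) auto
    then show ?thesis using Kn[OF L0] Kt[of "t/2"] L0 Lt by linarith
  qed
  then have "f (t+L) * (neg_tail K L + tail K (t/2)) \<le> f (t/2) * (2 * M * tail F L)"
    using ft f01 nKnn tKnn by (meson add_nonneg_nonneg mult_mono)
  with lo ft show "tail (scale_df a F) t - T_op K (tail (scale_df a F)) t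
           \<le> (tail (scale_df a F) (t-L) - tail (scale_df a F) (t+L)) + 2 * M * tail (scale_df a F) (t/2) * tail F L"
    unfolding f_def[symmetric] by (simp add: algebra_simps)
qed


lemma hz_deriv:
  assumes H0: "\<forall>t\<ge>t0. F t < 1 \<and> (F has_real_derivative (h t * (1 - F t))) (at t)"
    and s: "s \<ge> t0"
  shows "((\<lambda>s. 1 - F s) has_real_derivative -(h s * (1 - F s))) (at s)"
    and "((\<lambda>s. ln (1 - F s)) has_real_derivative -h s) (at s)"
proof -
  have d: "(F has_real_derivative (h s * (1 - F s))) (at s)" and p: "F s < 1" using H0 s by auto
  show d1: "((\<lambda>s. 1 - F s) has_real_derivative -(h s * (1 - F s))) (at s)"
    using d by (auto intro!: derivative_eq_intros)
  have D: "((\<lambda>s. ln (1 - F s)) has_real_derivative inverse (1 - F s) * (-(h s * (1 - F s)))) (at s)"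
    using DERIV_chain2[OF DERIV_ln[of "1 - F s"] d1] p by simp
  have E: "inverse (1 - F s) * (-(h s * (1 - F s))) = -h s" using p by (simp add: field_simps)
  from D show "((\<lambda>s. ln (1 - F s)) has_real_derivative -h s) (at s)"
    unfolding E .
qed

lemma poly_decay:
  assumes H0: "\<forall>t\<ge>t0. F t < 1 \<and> (F has_real_derivative (h t * (1 - F t))) (at t)"
    and lim: "filterlim (\<lambda>t. t * h t) at_top at_top"
  shows "\<exists>C. \<forall>\<^sub>F t in at_top. 1 - F (sqrt t) \<le> C / t"
proof -
  from lim have "\<forall>\<^sub>F t in at_top. t * h t \<ge> 2" by (simp add: filterlim_at_top)
  then obtain S where S: "\<And>s. s \<ge> S \<Longrightarrow> s * h s \<ge> 2" by (auto simp: eventually_at_top_linorder)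
  define s1 where "s1 = max S (max t0 1)"
  define C where "C = (1 - F s1) * s1^2"
  have key: "(1 - F s) * s^2 \<le> C" if "s \<ge> s1" for s
  proof (cases "s = s1")
    case True then show ?thesis by (simp add: C_def)
  next
    case False
    with that have lt: "s1 < s" by simp
    have "\<And>x. s1 \<le> x \<Longrightarrow> x \<le> s \<Longrightarrow> ((\<lambda>x. (1 - F x) * x^2) has_real_derivative
          (-(h x * (1 - F x))) * x^2 + (2 * x) * (1 - F x)) (at x)"
    proof -
      fix x assume "s1 \<le> x" "x \<le> s"
      then have "x \<ge> t0" by (simp add: s1_def)
      have "((\<lambda>x. x^2) has_real_derivative 2 * x) (at x)" by (auto intro!: derivative_eq_intros)
      from DERIV_mult[OF hz_deriv(1)[OF H0 \<open>x \<ge> t0\<close>] this]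
      show "((\<lambda>x. (1 - F x) * x^2) has_real_derivative
          (-(h x * (1 - F x))) * x^2 + (2 * x) * (1 - F x)) (at x)" .
    qed
    from MVT2[OF lt this] obtain z where z: "s1 < z" "z < s"
      and eq: "(1 - F s) * s^2 - (1 - F s1) * s1^2 = (s - s1) * ((-(h z * (1 - F z))) * z^2 + (2 * z) * (1 - F z))"
      by blast
    have zS: "z \<ge> S" "z \<ge> t0" "z \<ge> 1" using z by (auto simp: s1_def)
    have "(-(h z * (1 - F z))) * z^2 + (2 * z) * (1 - F z) = (1 - F z) * z * (2 - z * h z)"
      by (simp add: algebra_simps power2_eq_square)
    also have "\<dots> \<le> 0"
    proof -
      have "0 \<le> (1 - F z) * z" using H0 zS by auto
      moreover have "2 - z * h z \<le> 0" using S[OF zS(1)] by simp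
      ultimately show ?thesis by (simp add: mult_nonneg_nonpos)
    qed
    finally have "(s - s1) * ((-(h z * (1 - F z))) * z^2 + (2 * z) * (1 - F z)) \<le> 0"
      using lt by (simp add: mult_nonneg_nonpos)
    then show ?thesis using eq by (simp add: C_def)
  qed
  have "\<forall>\<^sub>F t in at_top. t \<ge> s1^2" by (rule eventually_ge_at_top)
  then have "\<forall>\<^sub>F t in at_top. 1 - F (sqrt t) \<le> C / t"
  proof (rule eventually_mono)
    fix t assume t: "t \<ge> s1^2"
    have s1p: "s1 \<ge> 1" by (simp add: s1_def)
    then have tp: "t > 0" using t by (smt (verit) one_le_power)
    have "sqrt t \<ge> s1" using t s1p by (metis abs_of_nonneg order_trans real_le_rsqrt zero_le_one)
    from key[OF this] have "(1 - F (sqrt t)) * t \<le> C" using tp by simp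
    then show "1 - F (sqrt t) \<le> C / t" using tp by (simp add: pos_le_divide_eq)
  qed
  then show ?thesis by blast
qed


lemma ratio_bound:
  assumes H0: "\<forall>t\<ge>t0. F t < 1 \<and> (F has_real_derivative (h t * (1 - F t))) (at t)"
    and dF: "distribution_function F"
    and ho: "h \<in> o[at_top](\<lambda>t. ln t / t)"
    and b: "b > 0" and c: "c > 0"
  shows "\<forall>\<^sub>F t in at_top. 1 - F (t/c) \<le> t powr (1/4) * (1 - F (t/b))"
proof (cases "c \<le> b")
  case True
  have mF: "mono F" using dF by (simp add: distribution_function_def)
  have "\<forall>\<^sub>F t in at_top. t \<ge> (1::real)" by (rule eventually_ge_at_top)
  then show ?thesis
  proof (rule eventually_mono)
    fix t :: real assume t: "t \<ge> 1"
    have "t / b \<le> t / c" using t True b c by (simp add: frac_le)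
    then have "1 - F (t/c) \<le> 1 - F (t/b)" using mF by (auto simp: mono_def)
    also have "\<dots> \<le> t powr (1/4) * (1 - F (t/b))"
    proof -
      have "1 \<le> t powr (1/4)" using t by (simp add: ge_one_powr_ge_zero)
      moreover have "0 \<le> 1 - F (t/b)" using df_bounds[OF dF] by simp
      ultimately show ?thesis by (metis mult_cancel_right1 mult_right_mono)
    qed
    finally show "1 - F (t/c) \<le> t powr (1/4) * (1 - F (t/b))" .
  qed
next
  case False
  then have cb: "c > b" by simp
  define \<epsilon> where "\<epsilon> = b / (8 * (c - b))"
  have ep: "\<epsilon> > 0" using cb b by (simp add: \<epsilon>_def)
  from landau_o.smallD[OF ho ep] obtain U where U: "\<And>u. u \<ge> U \<Longrightarrow> norm (h u) \<le> \<epsilon> * norm (ln u / u)"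
    by (auto simp: eventually_at_top_linorder)
  define T1 where "T1 = max (c * max U (max t0 1)) (1/b)"
  have "\<forall>\<^sub>F t in at_top. t \<ge> (T1::real)" by (rule eventually_ge_at_top)
  then show ?thesis
  proof (rule eventually_mono)
    fix t :: real assume t: "t \<ge> T1"
    define x1 where "x1 = t / c"
    define x2 where "x2 = t / b"
    have cm: "c * max U (max t0 1) \<le> t" using t unfolding T1_def by (rule order_trans[OF max.cobounded1])
    have "max U (max t0 1) \<le> x1" unfolding x1_def using cm c by (metis mult.commute pos_le_divide_eq)
    then have x1ge: "x1 \<ge> U" "x1 \<ge> t0" "x1 \<ge> 1" by auto
    have tpos: "t > 0" using x1ge(3) c by (simp add: x1_def pos_le_divide_eq)
    have x12: "x1 < x2" using tpos b c cb by (simp add: x1_def x2_def frac_less2)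
    have "\<And>x. x1 \<le> x \<Longrightarrow> x \<le> x2 \<Longrightarrow> ((\<lambda>s. ln (1 - F s)) has_real_derivative -h x) (at x)"
      using x1ge by (intro hz_deriv(2)[OF H0]) simp
    from MVT2[OF x12 this] obtain z where z: "x1 < z" "z < x2"
      and eq: "ln (1 - F x2) - ln (1 - F x1) = (x2 - x1) * (- h z)" by blast
    have zp: "z \<ge> 1" "z \<ge> U" using z x1ge by auto
    have hz: "h z \<le> \<epsilon> * (ln z / z)"
      using U[OF zp(2)] zp(1) by (simp add: abs_le_iff)
    have lz: "ln z \<le> ln x2" "0 \<le> ln z" using z zp by auto
    have "ln z / z \<le> ln x2 / x1"
      using lz z x1ge by (intro frac_le) auto
    with hz ep have hz2: "h z \<le> \<epsilon> * (ln x2 / x1)" by (smt (verit) mult_left_mono)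
    have "(x2 - x1) * h z \<le> (x2 - x1) * (\<epsilon> * (ln x2 / x1))"
      using hz2 x12 by (intro mult_left_mono) auto
    also have "\<dots> = ln x2 / 8"
      using tpos b c cb by (simp add: x1_def x2_def \<epsilon>_def field_simps)
    also have "\<dots> \<le> ln t / 4"
    proof -
      have "ln x2 = ln t - ln b" using tpos b by (simp add: x2_def ln_div)
      moreover have "ln t \<ge> ln (1/b)" using t tpos b by (simp add: T1_def)
      ultimately show ?thesis using b by (simp add: ln_div)
    qed
    finally have "ln (1 - F x1) \<le> ln (1 - F x2) + ln t / 4" using eq by simp
    then have "exp (ln (1 - F x1)) \<le> exp (ln (1 - F x2) + ln t / 4)" by simp
    moreover have "1 - F x1 > 0" "1 - F x2 > 0" using H0 x1ge x12 by auto
    ultimately have "1 - F x1 \<le> (1 - F x2) * exp (ln t / 4)" by (simp add: exp_add)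
    moreover have "exp (ln t / 4) = t powr (1/4)" using tpos by (simp add: powr_def)
    ultimately show "1 - F (t/c) \<le> t powr (1/4) * (1 - F (t/b))"
      by (simp add: x1_def x2_def mult.commute)
  qed
qed


lemma diff_bound:
  assumes H0: "\<forall>t\<ge>t0. F t < 1 \<and> (F has_real_derivative (h t * (1 - F t))) (at t)"
    and dF: "distribution_function F"
    and ho: "h \<in> o[at_top](\<lambda>t. ln t / t)"
    and a: "a > 0"
  shows "\<forall>\<^sub>F t in at_top. (1 - F ((t - sqrt t)/a)) - (1 - F ((t + sqrt t)/a))
            \<le> (2 * sqrt t / a) * ((t/(2*a)) powr (-7/8) * (1 - F (t/(2*a))))"
proof -
  have mF: "mono F" using dF by (simp add: distribution_function_def)
  have "(\<lambda>t. ln t / t) \<in> O[at_top](\<lambda>t::real. t powr (-7/8))" by real_asymp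
  from landau_o.small_big_trans[OF ho this] have h78: "h \<in> o[at_top](\<lambda>t. t powr (-7/8))" .
  from landau_o.smallD[OF h78, of 1] obtain U where U: "\<And>u. u \<ge> U \<Longrightarrow> norm (h u) \<le> 1 * norm (u powr (-7/8))"
    by (auto simp: eventually_at_top_linorder)
  define T1 where "T1 = max 4 (2 * a * max U (max t0 1))"
  have "\<forall>\<^sub>F t in at_top. t \<ge> (T1::real)" by (rule eventually_ge_at_top)
  then show ?thesis
  proof (rule eventually_mono)
    fix t :: real assume t: "t \<ge> T1"
    define sq where "sq = sqrt t"
    define m where "m = t / (2*a)"
    define s1 where "s1 = (t - sq) / a"
    define s2 where "s2 = (t + sq) / a"
    have t4: "t \<ge> 4" using t unfolding T1_def by (rule order_trans[OF max.cobounded1])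
    have cm: "2 * a * max U (max t0 1) \<le> t" using t unfolding T1_def by (rule order_trans[OF max.cobounded2])
    have "max U (max t0 1) \<le> m" unfolding m_def using cm a
      by (metis mult.commute pos_le_divide_eq zero_less_mult_iff zero_less_numeral)
    then have mge: "m \<ge> U" "m \<ge> t0" "m \<ge> 1" by auto
    have sq2: "sq \<ge> 2" using t4 unfolding sq_def by (metis real_sqrt_four real_sqrt_le_iff)
    have sqsq: "sq * sq = t" using t4 unfolding sq_def by simp
    have "2 * sq \<le> sq * sq" using sq2 by (intro mult_right_mono) auto
    then have sqle: "sq \<le> t / 2" using sqsq by linarith
    have ms1: "m \<le> s1" using sqle a unfolding m_def s1_def by (simp add: field_simps)
    have s12: "s1 < s2" using sq2 a unfolding s1_def s2_def by (simp add: divide_strict_right_mono)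
    have "\<And>x. s1 \<le> x \<Longrightarrow> x \<le> s2 \<Longrightarrow> ((\<lambda>s. 1 - F s) has_real_derivative -(h x * (1 - F x))) (at x)"
      using mge ms1 by (intro hz_deriv(1)[OF H0]) simp
    from MVT2[OF s12 this] obtain z where z: "s1 < z" "z < s2"
      and eq: "(1 - F s2) - (1 - F s1) = (s2 - s1) * (-(h z * (1 - F z)))" by blast
    have zm: "m \<le> z" "z \<ge> U" "z > 0" using z ms1 mge by auto
    have hz: "h z \<le> m powr (-7/8)"
    proof -
      have "h z \<le> z powr (-7/8)" using U[OF zm(2)] zm(3) by (simp add: abs_le_iff)
      also have "\<dots> \<le> m powr (-7/8)" using zm mge by (intro powr_mono2') auto
      finally show ?thesis .
    qed
    have Fz: "1 - F z \<le> 1 - F m" "0 \<le> 1 - F z" using zm(1) mF df_bounds[OF dF, of z] by (auto simp: mono_def)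
    have "h z * (1 - F z) \<le> m powr (-7/8) * (1 - F m)"
      using hz Fz by (intro mult_mono) auto
    moreover have "s2 - s1 = 2 * sq / a" unfolding s1_def s2_def using a by (simp add: field_simps)
    ultimately have "(s2 - s1) * (h z * (1 - F z)) \<le> (2 * sq / a) * (m powr (-7/8) * (1 - F m))"
      using a sq2 by (metis mult_left_mono divide_nonneg_pos less_eq_real_def mult_nonneg_nonneg zero_le_numeral order_trans)
    then show "(1 - F ((t - sqrt t)/a)) - (1 - F ((t + sqrt t)/a))
            \<le> (2 * sqrt t / a) * ((t/(2*a)) powr (-7/8) * (1 - F (t/(2*a))))"
      using eq unfolding s1_def s2_def sq_def m_def by simp
  qed
qed


lemma gdecay:
  fixes a M C :: real assumes a: "a > 0"
  shows "((\<lambda>t. t powr (1/4) * ((2 * sqrt t / a) * (t/(2*a)) powr (-7/8) + 2 * M * C / t)) \<longlongrightarrow> 0) at_top"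
  using a by real_asymp

theorem lemma4p3p2:
  fixes F h K :: "real \<Rightarrow> real" and M :: real
  assumes "distribution_function F"
    and "hazard_rate F h"
    and "cond_H h"
    and "h \<in> o[at_top](\<lambda>t. ln t / t)"
    and "Limsup at_top (\<lambda>t. ereal (t * (h t)\<^sup>2 / h (1 / h t))) < \<infinity>"
    and "M > 0"
    and "K \<in> B_class F M"
  shows "\<forall>a>0. \<forall>b>0.
    (\<lambda>t. T_op K (tail (scale_df a F)) t - tail (scale_df a F) t)
      \<in> o[at_top](tail (scale_df b F))"
proof (intro allI impI)
  fix a b :: real assume a: "a > 0" and b: "b > 0"
  note dF = assms(1) and ho = assms(4) and M0 = assms(6) and KB = assms(7)
  from assms(2) obtain t0 where H0: "\<forall>t\<ge>t0. F t < 1 \<and> (F has_real_derivative (h t * (1 - F t))) (at t)"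
    by (auto simp: hazard_rate_def)
  have lim: "filterlim (\<lambda>t. t * h t) at_top at_top" using assms(3) by (simp add: cond_H_def)
  from poly_decay[OF H0 lim] obtain C where PC: "\<forall>\<^sub>F t in at_top. 1 - F (sqrt t) \<le> C / t" by blast
  have R: "\<forall>\<^sub>F t in at_top. 1 - F (t/(2*a)) \<le> t powr (1/4) * (1 - F (t/b))"
    using ratio_bound[OF H0 dF ho b, of "2*a"] a by simp
  have DB: "\<forall>\<^sub>F t in at_top. (1 - F ((t - sqrt t)/a)) - (1 - F ((t + sqrt t)/a))
            \<le> (2 * sqrt t / a) * ((t/(2*a)) powr (-7/8) * (1 - F (t/(2*a))))"
    by (rule diff_bound[OF H0 dF ho a])
  define g where "g t = t powr (1/4) * ((2 * sqrt t / a) * (t/(2*a)) powr (-7/8) + 2 * M * C / t)" for t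
  have g0: "(g \<longlongrightarrow> 0) at_top" unfolding g_def by (rule gdecay[OF a])
  show "(\<lambda>t. T_op K (tail (scale_df a F)) t - tail (scale_df a F) t) \<in> o[at_top](tail (scale_df b F))"
  proof (rule landau_o.smallI)
    fix c :: real assume c: "c > 0"
    have gc: "\<forall>\<^sub>F t in at_top. g t < c" using order_tendstoD(2)[OF g0 c] .
    have t4: "\<forall>\<^sub>F t in at_top. t \<ge> (4::real)" by (rule eventually_ge_at_top)
    show "\<forall>\<^sub>F t in at_top. norm (T_op K (tail (scale_df a F)) t - tail (scale_df a F) t) \<le> c * norm (tail (scale_df b F) t)"
      using PC R DB gc t4
    proof eventually_elim
      case (elim t)
      then have pc: "1 - F (sqrt t) \<le> C / t" and r: "1 - F (t/(2*a)) \<le> t powr (1/4) * (1 - F (t/b))"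
        and db: "(1 - F ((t - sqrt t)/a)) - (1 - F ((t + sqrt t)/a))
            \<le> (2 * sqrt t / a) * ((t/(2*a)) powr (-7/8) * (1 - F (t/(2*a))))"
        and gt: "g t < c" and t: "t \<ge> 4" by auto
      define sq where "sq = sqrt t"
      have sq2: "sq \<ge> 2" using t unfolding sq_def by (metis real_sqrt_four real_sqrt_le_iff)
      have sqsq: "sq * sq = t" using t unfolding sq_def by simp
      have "2 * sq \<le> sq * sq" using sq2 by (intro mult_right_mono) auto
      then have sqle: "sq \<le> t / 2" using sqsq by linarith
      have sq0: "0 \<le> sq" using sq2 by simp
      define D where "D = T_op K (tail (scale_df a F)) t - tail (scale_df a F) t"
      define Q where "Q = 1 - F (t/(2*a))"
      define P where "P = 1 - F sq"
      have f: "tail (scale_df a F) s = 1 - F (s/a)" for s by (simp add: tail_def scale_df_def)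
      have ft2: "tail (scale_df a F) (t/2) = Q" by (simp add: f Q_def)
      have tF: "tail F sq = P" by (simp add: tail_def P_def)
      have Q0: "Q \<ge> 0" "P \<ge> 0" using df_bounds[OF dF] by (auto simp: Q_def P_def)
      have up: "D \<le> (2 * sq / a) * ((t/(2*a)) powr (-7/8) * Q) + M * Q * P"
        using T_bound(1)[OF dF KB a M0 sq0 sqle] sq2 db unfolding D_def ft2 tF
        by (simp add: f sq_def Q_def)
      have lo: "- D \<le> (2 * sq / a) * ((t/(2*a)) powr (-7/8) * Q) + 2 * M * Q * P"
        using T_bound(2)[OF dF KB a M0 sq0 sqle] sq2 db unfolding D_def ft2 tF
        by (simp add: f sq_def Q_def)
      have "M * Q * P \<le> 2 * M * Q * P" using M0 Q0 by simp
      with up lo have "\<bar>D\<bar> \<le> (2 * sq / a) * ((t/(2*a)) powr (-7/8) * Q) + 2 * M * Q * P" by linarith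
      also have "\<dots> \<le> (2 * sq / a) * ((t/(2*a)) powr (-7/8) * Q) + 2 * M * Q * (C / t)"
      proof -
        have "2 * M * Q * P \<le> 2 * M * Q * (C / t)"
          using pc M0 Q0 by (intro mult_left_mono) (auto simp: P_def sq_def)
        then show ?thesis by linarith
      qed
      also have "\<dots> = Q * ((2 * sq / a) * (t/(2*a)) powr (-7/8) + 2 * M * C / t)"
        by (simp add: algebra_simps)
      also have "\<dots> \<le> (t powr (1/4) * (1 - F (t/b))) * ((2 * sq / a) * (t/(2*a)) powr (-7/8) + 2 * M * C / t)"
      proof (rule mult_right_mono)
        show "Q \<le> t powr (1/4) * (1 - F (t/b))" using r by (simp add: Q_def)
        have "0 \<le> C / t" using pc Q0 by (simp add: P_def sq_def)
        then show "0 \<le> (2 * sq / a) * (t/(2*a)) powr (-7/8) + 2 * M * C / t"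
        proof -
          have "0 \<le> (2 * sq / a) * (t/(2*a)) powr (-7/8)" using a sq2 by simp
          moreover have "2 * M * C / t = 2 * M * (C / t)" by simp
          moreover have "0 \<le> 2 * M * (C / t)" using M0 \<open>0 \<le> C / t\<close> by (intro mult_nonneg_nonneg) auto
          ultimately show ?thesis by linarith
        qed
      qed
      also have "\<dots> = g t * (1 - F (t/b))" using t by (simp add: g_def sq_def field_simps)
      also have "\<dots> \<le> c * (1 - F (t/b))"
        using gt df_bounds[OF dF, of "t/b"] by (intro mult_right_mono) auto
      finally show ?case
        using df_bounds[OF dF, of "t/b"] by (simp add: D_def tail_def scale_df_def)
    qed
  qed
qed

end
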